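(* In the (heterogeneous) UAV Persistent Service model with parameters $f>0$, $c\ge0$ and displacement times $g_1,\dots,g_N>0$ satisfying $2g_i<f$, every feasible schedule (one keeping all $N$ locations covered at all times $t\ge0$) uses at least $$M_{LB}=N+\left\lceil\sum_{i=1}^N\frac{c+2g_i}{f-2g_i}\right\rceil$$ UAVs.
   Context: UAV Persistent Service model: there is a single recharging station (RS) and a finite set of $N$ aerial locations, served by identical UAVs. A UAV with a full battery can fly for at most $f$ time units; replacing/recharging its battery at the RS takes $c$ time units. Flying between the RS and location $i$ (either direction) takes $g_i$ time units. A UAV's activity consists of sorties: it leaves the RS fully charged, flies to one location, stays there (covering it), and flies back to the RS, with total airborne time of the sortie at most $f$; it then spends $c$ time units recharging at the RS (possibly followed by idle time) before its next sortie. At time $0$ each UAV is fully charged, either at the RS or at a location. A location is covered at time $t$ if some UAV is present at it at time $t$. A schedule is feasible if every location is covered at every time $t\ge0$. *)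

theory Defs
  imports Complex_Main "HOL-Library.Extended_Nat"
begin

text \<open>
  Schedule of a single UAV.  Its activity is a (finite or infinite) sequence of
  sorties, indexed by k with enat k < nsort.  Sortie k serves location sloc k,
  the UAV is present at that location exactly during [sarr k, sdep k]
  (arrival and departure at the location).  For an ordinary sortie the UAV
  leaves the RS at sarr k - g and is back at the RS at sdep k + g.
  If starts_at_loc holds, the UAV is at location sloc 0 at time 0 with a full
  battery, i.e. sortie 0 begins at the location at time 0 (no outbound leg).
\<close>
record uav_sched =
  nsort :: enat
  sloc :: "nat \<Rightarrow> nat"
  sarr :: "nat \<Rightarrow> real"
  sdep :: "nat \<Rightarrow> real"
  starts_at_loc :: bool

definition valid_uav ::
  "nat \<Rightarrow> (nat \<Rightarrow> real) \<Rightarrow> real \<Rightarrow> real \<Rightarrow> uav_sched \<Rightarrow> bool" where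
  "valid_uav N g f c s \<longleftrightarrow>
     (starts_at_loc s \<longrightarrow> nsort s > 0) \<and>
     (\<forall>k. enat k < nsort s \<longrightarrow> sloc s k < N \<and> sarr s k \<le> sdep s k) \<and>
     \<comment> \<open>first sortie\<close>
     (nsort s > 0 \<longrightarrow>
        (if starts_at_loc s
         then sarr s 0 = 0 \<and> sdep s 0 + g (sloc s 0) - 0 \<le> f
         else 0 \<le> sarr s 0 - g (sloc s 0) \<and>
              (sdep s 0 + g (sloc s 0)) - (sarr s 0 - g (sloc s 0)) \<le> f)) \<and>
     \<comment> \<open>later sorties: airborne time at most f, and recharging of c time units
         at the RS between return and next departure\<close>
     (\<forall>k. enat (Suc k) < nsort s \<longrightarrow>
        (sdep s (Suc k) + g (sloc s (Suc k))) - (sarr s (Suc k) - g (sloc s (Suc k))) \<le> f \<and>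
        sdep s k + g (sloc s k) + c \<le> sarr s (Suc k) - g (sloc s (Suc k)))"

definition covered :: "nat \<Rightarrow> (nat \<Rightarrow> uav_sched) \<Rightarrow> nat \<Rightarrow> real \<Rightarrow> bool" where
  "covered M \<sigma> i t \<longleftrightarrow>
     (\<exists>u<M. \<exists>k. enat k < nsort (\<sigma> u) \<and> sloc (\<sigma> u) k = i \<and>
                 sarr (\<sigma> u) k \<le> t \<and> t \<le> sdep (\<sigma> u) k)"

definition feasible ::
  "nat \<Rightarrow> (nat \<Rightarrow> real) \<Rightarrow> real \<Rightarrow> real \<Rightarrow> nat \<Rightarrow> (nat \<Rightarrow> uav_sched) \<Rightarrow> bool" where
  "feasible N g f c M \<sigma> \<longleftrightarrow>
     (\<forall>u<M. valid_uav N g f c (\<sigma> u)) \<and>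
     (\<forall>i<N. \<forall>t\<ge>0. covered M \<sigma> i t)"

end

theory Submission
  imports Defs
begin

lemma cover_len:
  fixes I :: "'i set" and a b :: "'i \<Rightarrow> real"
  assumes "finite I"
    and "\<forall>t. x < t \<and> t \<le> y \<longrightarrow> (\<exists>j\<in>I. a j \<le> t \<and> t \<le> b j)"
    and "\<forall>j\<in>I. a j \<le> b j"
  shows "y - x \<le> (\<Sum>j\<in>I. b j - a j)"
  using assms
proof (induction I arbitrary: y rule: finite_psubset_induct)
  case (psubset I)
  have nn: "\<And>J. J \<subseteq> I \<Longrightarrow> 0 \<le> (\<Sum>j\<in>J. b j - a j)"
    using psubset.prems(2) by (intro sum_nonneg) auto
  show ?case
  proof (cases "y \<le> x")
    case True
    then show ?thesis using nn[of I] by simp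
  next
    case False
    then obtain j where j: "j\<in>I" "a j \<le> y" "y \<le> b j" using psubset.prems(1)[rule_format, of y] False by auto
    define I' where "I' = I - {j}"
    have sub: "I' \<subset> I" using j(1) I'_def by auto
    have sumI: "(\<Sum>j\<in>I. b j - a j) = (b j - a j) + (\<Sum>j\<in>I'. b j - a j)"
      unfolding I'_def using psubset.hyps j(1) by (simp add: sum.remove)
    have nn': "0 \<le> (\<Sum>j\<in>I'. b j - a j)" using nn sub by auto
    show ?thesis
    proof (cases "a j \<le> x")
      case True
      then show ?thesis using sumI nn' j by simp
    next
      case False
      define S' where "S' = (\<Sum>j\<in>I'. b j - a j)"
      have "a j - x \<le> S'"
      proof (rule ccontr)
        assume "\<not> a j - x \<le> S'"
        hence lt: "S' < a j - x" by simp
        define z where "z = x + (S' + (a j - x)) / 2"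
        have z1: "z < a j" "S' < z - x" using lt unfolding z_def by (auto simp: field_simps)
        have "z - x \<le> S'"
          unfolding S'_def
        proof (rule psubset.IH[OF sub])
          show "\<forall>t. x < t \<and> t \<le> z \<longrightarrow> (\<exists>j\<in>I'. a j \<le> t \<and> t \<le> b j)"
          proof (intro allI impI)
            fix t assume t: "x < t \<and> t \<le> z"
            hence "t \<le> y" using z1 j by simp
            then obtain j' where "j'\<in>I" "a j' \<le> t" "t \<le> b j'" using psubset.prems(1)[rule_format, of t] t by auto
            moreover have "j' \<noteq> j" using \<open>a j' \<le> t\<close> t z1 by auto
            ultimately show "\<exists>j\<in>I'. a j \<le> t \<and> t \<le> b j" unfolding I'_def by auto
          qed
          show "\<forall>j\<in>I'. a j \<le> b j" using psubset.prems(2) I'_def by auto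
        qed
        then show False using z1 by simp
      qed
      then show ?thesis using sumI j S'_def by simp
    qed
  qed
qed

lemma down_closed_eq:
  fixes K :: "nat set"
  assumes "finite K" "\<forall>k\<in>K. \<forall>j\<le>k. j\<in>K"
  shows "K = {..<card K}"
proof
  show "K \<subseteq> {..<card K}"
  proof
    fix k assume k: "k \<in> K"
    show "k \<in> {..<card K}"
    proof (rule ccontr)
      assume "k \<notin> {..<card K}"
      hence "card K \<le> k" by simp
      have "{..k} \<subseteq> K" using k assms(2) by auto
      hence "card {..k} \<le> card K" using assms(1) card_mono by blast
      thus False using \<open>card K \<le> k\<close> by simp
    qed
  qed
  show "{..<card K} \<subseteq> K"
  proof
    fix j assume j: "j \<in> {..<card K}"
    show "j \<in> K"
    proof (rule ccontr)
      assume nj: "j \<notin> K"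
      have "K \<subseteq> {..<j}"
      proof
        fix k assume "k \<in> K"
        show "k \<in> {..<j}"
        proof (rule ccontr)
          assume "k \<notin> {..<j}"
          hence "j \<le> k" by simp
          thus False using assms(2) \<open>k\<in>K\<close> nj by blast
        qed
      qed
      hence "card K \<le> j" using card_mono[of "{..<j}" K] by simp
      thus False using j by simp
    qed
  qed
qed

lemma telescope:
  fixes e s :: "nat \<Rightarrow> real"
  assumes "\<forall>k. Suc k < n \<longrightarrow> e k \<le> s (Suc k)" "n > 0"
  shows "(\<Sum>k<n. e k - s k) \<le> e (n - 1) - s 0"
  using assms
proof (induction n)
  case 0 then show ?case by simp
next
  case (Suc n)
  show ?case
  proof (cases "n = 0")
    case True then show ?thesis by simp
  next
    case False
    have IH: "(\<Sum>k<n. e k - s k) \<le> e (n - 1) - s 0" using Suc False by simp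
    have "Suc (n - 1) < Suc n" using False by simp
    hence "e (n - 1) \<le> s (Suc (n - 1))" using Suc.prems(1) by blast
    hence "e (n - 1) \<le> s n" using False by simp
    then show ?thesis using IH by simp
  qed
qed


lemma uav_bound:
  fixes s :: uav_sched and w :: "nat \<Rightarrow> real"
  assumes V: "valid_uav N g f c s" and f: "f > 0" and c: "c \<ge> 0"
    and dpos: "\<delta> > 0" and dle: "\<forall>i<N. \<delta> \<le> g i" and g2: "\<forall>i<N. 2 * g i < f"
    and T: "T \<ge> 0"
    and wnn: "\<forall>i<N. 0 \<le> w i \<and> w i \<le> W"
    and wprop: "\<forall>i<N. \<forall>L. 0 \<le> L \<and> L \<le> f - 2 * g i \<longrightarrow> w i * L \<le> L + 2 * g i + c"
    and W: "W \<ge> 0"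
  shows "finite {k. enat k < nsort s \<and> sarr s k \<le> T} \<and>
    (\<Sum>k\<in>{k. enat k < nsort s \<and> sarr s k \<le> T}. w (sloc s k) * (sdep s k - sarr s k))
       \<le> T + 2*f + c + W*f"
proof -
  define K where "K = {k. enat k < nsort s \<and> sarr s k \<le> T}"
  note V' = V[unfolded valid_uav_def]
  have loc: "\<And>k. enat k < nsort s \<Longrightarrow> sloc s k < N \<and> sarr s k \<le> sdep s k" using V' by blast
  have nxt: "\<And>k. enat (Suc k) < nsort s \<Longrightarrow>
      (sdep s (Suc k) + g (sloc s (Suc k))) - (sarr s (Suc k) - g (sloc s (Suc k))) \<le> f \<and>
      sdep s k + g (sloc s k) + c \<le> sarr s (Suc k) - g (sloc s (Suc k))" using V' by blast
  have fst: "nsort s > 0 \<Longrightarrow> (if starts_at_loc s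
         then sarr s 0 = 0 \<and> sdep s 0 + g (sloc s 0) - 0 \<le> f
         else 0 \<le> sarr s 0 - g (sloc s 0) \<and>
              (sdep s 0 + g (sloc s 0)) - (sarr s 0 - g (sloc s 0)) \<le> f)" using V' by blast
  have pre: "\<And>k. enat (Suc k) < nsort s \<Longrightarrow> enat k < nsort s"
  proof -
    fix k assume "enat (Suc k) < nsort s"
    moreover have "enat k < enat (Suc k)" by simp
    ultimately show "enat k < nsort s" by (rule order.strict_trans[rotated])
  qed
  have gpos: "\<And>k. enat k < nsort s \<Longrightarrow> \<delta> \<le> g (sloc s k) \<and> 0 < g (sloc s k) \<and> 2 * g (sloc s k) < f"
    using loc dle g2 dpos by force
  have step: "\<And>k. enat (Suc k) < nsort s \<Longrightarrow> sarr s k + \<delta> \<le> sarr s (Suc k)"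
  proof -
    fix k assume k: "enat (Suc k) < nsort s"
    have "sdep s k + g (sloc s k) + c \<le> sarr s (Suc k) - g (sloc s (Suc k))" using nxt[OF k] by blast
    moreover have "sarr s k \<le> sdep s k" using loc[OF pre[OF k]] by blast
    moreover have "\<delta> \<le> g (sloc s (Suc k))" "0 < g (sloc s k)" using gpos[OF k] gpos[OF pre[OF k]] by auto
    ultimately show "sarr s k + \<delta> \<le> sarr s (Suc k)" using c by linarith
  qed
  have s0: "0 \<le> sarr s 0" if n: "nsort s > 0"
  proof -
    from n have "enat 0 < nsort s" by (simp add: zero_enat_def)
    hence "0 < g (sloc s 0)" using gpos by blast
    thus "0 \<le> sarr s 0" using fst[OF n] by (auto split: if_splits)
  qed
  have lin: "real k * \<delta> \<le> sarr s k" if "enat k < nsort s" for k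
    using that
  proof (induction k)
    case 0 thus ?case using s0 by (simp add: zero_enat_def)
  next
    case (Suc k)
    have "real k * \<delta> \<le> sarr s k" using Suc pre by blast
    moreover have "sarr s k + \<delta> \<le> sarr s (Suc k)" using step Suc.prems by blast
    ultimately show ?case by (simp add: algebra_simps)
  qed
  have mono: "\<forall>j\<le>k. sarr s j \<le> sarr s k" if "enat k < nsort s" for k
    using that
  proof (induction k)
    case 0 thus ?case by simp
  next
    case (Suc k)
    have IH: "\<forall>j\<le>k. sarr s j \<le> sarr s k" using Suc pre by blast
    have "sarr s k + \<delta> \<le> sarr s (Suc k)" using step Suc.prems by blast
    show ?case
    proof (intro allI impI)
      fix j assume "j \<le> Suc k"
      then consider "j = Suc k" | "j \<le> k" by linarith
      then show "sarr s j \<le> sarr s (Suc k)"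
        using IH \<open>sarr s k + \<delta> \<le> sarr s (Suc k)\<close> dpos by cases force+
    qed
  qed
  have dc: "\<forall>k\<in>K. \<forall>j\<le>k. j\<in>K"
  proof (intro ballI allI impI)
    fix k j assume k: "k \<in> K" and j: "j \<le> k"
    have kk: "enat k < nsort s" "sarr s k \<le> T" using k K_def by auto
    have "enat j \<le> enat k" using j by simp
    hence "enat j < nsort s" using kk(1) by (rule order.strict_trans1)
    moreover have "sarr s j \<le> T" using mono[OF kk(1)] j kk(2) by force
    ultimately show "j \<in> K" using K_def by simp
  qed
  have finK: "finite K"
  proof (rule finite_subset)
    show "K \<subseteq> {..nat \<lceil>T/\<delta>\<rceil>}"
    proof
      fix k assume k: "k \<in> K"
      have "real k * \<delta> \<le> T" using lin[of k] k K_def by auto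
      hence "real k \<le> T / \<delta>" using dpos by (simp add: pos_le_divide_eq)
      hence "real k \<le> of_int \<lceil>T/\<delta>\<rceil>" using le_of_int_ceiling order_trans by blast
      hence "int k \<le> \<lceil>T/\<delta>\<rceil>" by linarith
      thus "k \<in> {..nat \<lceil>T/\<delta>\<rceil>}" by simp
    qed
  qed simp
  define n where "n = card K"
  have Keq: "K = {..<n}" using down_closed_eq finK dc n_def by blast
  have kin: "enat k < nsort s \<and> sarr s k \<le> T" if "k < n" for k
    using that Keq K_def by blast
  have RHS: "0 \<le> T + 2*f + c + W*f" using T f c W by simp
  have main: "(\<Sum>k<n. w (sloc s k) * (sdep s k - sarr s k)) \<le> T + 2*f + c + W*f"
  proof (cases "n = 0")
    case True then show ?thesis using RHS by simp
  next
    case False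
    define e where "e k = sdep s k + g (sloc s k) + c" for k
    define b where "b k = sarr s k - g (sloc s k)" for k
    have tel: "(\<Sum>k<n. e k - b k) \<le> e (n-1) - b 0"
    proof (rule telescope)
      show "\<forall>k. Suc k < n \<longrightarrow> e k \<le> b (Suc k)"
        using nxt kin unfolding e_def b_def by blast
    qed (use False in simp)
    have ns: "nsort s > 0" using kin[of 0] False by (simp add: zero_enat_def)
    have eb: "sdep s k + g (sloc s k) \<le> sarr s k + f" if "k < n" for k
    proof (cases k)
      case 0
      have "0 < g (sloc s 0)" using gpos kin[of 0] False by blast
      then show ?thesis using fst[OF ns] 0 by (auto split: if_splits)
    next
      case (Suc j)
      have "0 < g (sloc s k)" using gpos kin[OF that] by blast
      then show ?thesis using nxt[of j] kin[OF that] Suc by auto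
    qed
    have e_end: "e (n-1) \<le> T + f + c" using eb[of "n-1"] kin[of "n-1"] False e_def by simp
    have b0: "b 0 \<ge> - f" using s0[OF ns] gpos[of 0] kin[of 0] False b_def by auto
    have per: "w (sloc s k) * (sdep s k - sarr s k) \<le> (e k - b k) + (if k = 0 then W*f else 0)"
      if k: "k < n" for k
    proof -
      have kk: "enat k < nsort s" using kin[OF k] by blast
      have lk: "sloc s k < N" "sarr s k \<le> sdep s k" using loc[OF kk] by auto
      have gk: "0 < g (sloc s k)" using gpos[OF kk] by blast
      have ebk: "e k - b k = (sdep s k - sarr s k) + 2 * g (sloc s k) + c" using e_def b_def by simp
      show ?thesis
      proof (cases k)
        case 0
        have Lf: "sdep s k - sarr s k \<le> f" using eb[OF k] gk by linarith
        have w0: "0 \<le> w (sloc s k)" "w (sloc s k) \<le> W" using wnn lk by auto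
        have "w (sloc s k) * (sdep s k - sarr s k) \<le> w (sloc s k) * f"
          using Lf w0 by (intro mult_left_mono) auto
        also have "\<dots> \<le> W * f" using w0 f by (intro mult_right_mono) auto
        finally show ?thesis using ebk 0 lk gk c by simp
      next
        case (Suc j)
        have "(sdep s k + g (sloc s k)) - (sarr s k - g (sloc s k)) \<le> f" using nxt[of j] kk Suc by auto
        hence "sdep s k - sarr s k \<le> f - 2 * g (sloc s k)" by simp
        hence "w (sloc s k) * (sdep s k - sarr s k) \<le> (sdep s k - sarr s k) + 2 * g (sloc s k) + c"
          using wprop lk by auto
        then show ?thesis using ebk Suc by simp
      qed
    qed
    have "(\<Sum>k<n. w (sloc s k) * (sdep s k - sarr s k))
        \<le> (\<Sum>k<n. (e k - b k) + (if k = 0 then W*f else 0))"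
      by (rule sum_mono) (use per in simp)
    also have "\<dots> = (\<Sum>k<n. e k - b k) + W*f" using False by (simp add: sum.distrib)
    also have "\<dots> \<le> T + 2*f + c + W*f" using tel e_end b0 by linarith
    finally show ?thesis .
  qed
  show ?thesis using finK main Keq K_def by simp
qed


theorem theorem4:
  fixes N M :: nat and g :: "nat \<Rightarrow> real" and f c :: real
    and \<sigma> :: "nat \<Rightarrow> uav_sched"
  assumes "f > 0" and "c \<ge> 0"
    and "\<And>i. i < N \<Longrightarrow> g i > 0"
    and "\<And>i. i < N \<Longrightarrow> 2 * g i < f"
    and "feasible N g f c M \<sigma>"
  shows "int M \<ge> int N + \<lceil>\<Sum>i<N. (c + 2 * g i) / (f - 2 * g i)\<rceil>"
proof (cases "N = 0")
  case True then show ?thesis by simp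
next
  case False
  note F = assms(5)[unfolded feasible_def]
  have fpos: "f > 0" and cnn: "c \<ge> 0" using assms by auto
  define w where "w i = (f + c) / (f - 2 * g i)" for i
  define S where "S = (\<Sum>i<N. w i)"
  have wpos: "\<forall>i<N. 0 \<le> w i" using assms unfolding w_def
    by (smt (verit) divide_nonneg_pos)
  have wS: "\<forall>i<N. w i \<le> S" unfolding S_def
    using wpos by (auto intro!: member_le_sum)
  have S0: "S \<ge> 0" unfolding S_def using wpos by (auto intro!: sum_nonneg)
  have wprop: "\<forall>i<N. \<forall>L. 0 \<le> L \<and> L \<le> f - 2 * g i \<longrightarrow> w i * L \<le> L + 2 * g i + c"
  proof (intro allI impI)
    fix i L assume i: "i < N" and L: "0 \<le> L \<and> L \<le> f - 2 * g i"
    have d: "f - 2 * g i > 0" using assms(4)[OF i] by simp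
    have gi: "g i > 0" using assms(3)[OF i] .
    have h: "(c + 2*g i)*L \<le> (c+2*g i)*(f - 2*g i)"
      using L gi cnn by (intro mult_left_mono) auto
    have eq: "(L + 2*g i + c)*(f - 2*g i) - (f+c)*L = (c + 2*g i)*(f - 2*g i) - (c+2*g i)*L"
      by (simp add: algebra_simps)
    have "(f+c)*L \<le> (L + 2*g i + c)*(f - 2*g i)" using h eq by linarith
    hence "(f+c)*L / (f - 2*g i) \<le> L + 2*g i + c" using d by (simp add: pos_divide_le_eq)
    thus "w i * L \<le> L + 2 * g i + c" unfolding w_def by simp
  qed
  define \<delta> where "\<delta> = Min (g ` {..<N})"
  have dmem: "\<delta> \<in> g ` {..<N}" unfolding \<delta>_def using False by (intro Min_in) auto
  have dpos: "\<delta> > 0" using dmem assms(3) by auto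
  have dle: "\<forall>i<N. \<delta> \<le> g i" unfolding \<delta>_def by auto
  have g2: "\<forall>i<N. 2 * g i < f" using assms(4) by auto
  define C where "C = 2*f + c + S*f"
  have key: "T * S \<le> real M * (T + C)" if T: "T > 0" for T
  proof -
    define K where "K u = {k. enat k < nsort (\<sigma> u) \<and> sarr (\<sigma> u) k \<le> T}" for u
    define loc where "loc p = sloc (\<sigma> (fst p)) (snd p)" for p
    define L where "L p = sdep (\<sigma> (fst p)) (snd p) - sarr (\<sigma> (fst p)) (snd p)" for p
    define P where "P = Sigma {..<M} K"
    have ub: "finite (K u) \<and> (\<Sum>k\<in>K u. w (sloc (\<sigma> u) k) * (sdep (\<sigma> u) k - sarr (\<sigma> u) k)) \<le> T + C"
      if u: "u < M" for u
    proof -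
      have "valid_uav N g f c (\<sigma> u)" using F u by blast
      from uav_bound[OF this fpos cnn dpos dle g2 _ _ wprop S0, of T] T wpos wS
      show ?thesis unfolding K_def C_def by auto
    qed
    have finP: "finite P" unfolding P_def using ub by (intro finite_SigmaI) auto
    define h where "h u k = w (sloc (\<sigma> u) k) * (sdep (\<sigma> u) k - sarr (\<sigma> u) k)" for u k
    have upper: "(\<Sum>p\<in>P. w (loc p) * L p) \<le> real M * (T + C)"
    proof -
      have "(\<Sum>u<M. \<Sum>k\<in>K u. h u k) = (\<Sum>(u,k)\<in>P. h u k)"
        unfolding P_def using ub by (simp add: sum.Sigma)
      also have "\<dots> = (\<Sum>p\<in>P. w (loc p) * L p)"
        by (rule sum.cong) (auto simp: loc_def L_def h_def)
      finally have eq: "(\<Sum>p\<in>P. w (loc p) * L p) = (\<Sum>u<M. \<Sum>k\<in>K u. h u k)" ..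
      have "(\<Sum>u<M. \<Sum>k\<in>K u. h u k) \<le> (\<Sum>u<M. T + C)"
        by (rule sum_mono) (use ub in \<open>auto simp: h_def\<close>)
      thus ?thesis using eq by simp
    qed
    have locP: "loc ` P \<subseteq> {..<N}"
    proof
      fix i assume "i \<in> loc ` P"
      then obtain u k where p: "u < M" "k \<in> K u" "i = sloc (\<sigma> u) k"
        unfolding P_def loc_def by auto
      have "valid_uav N g f c (\<sigma> u)" using F p(1) by blast
      thus "i \<in> {..<N}" using p unfolding K_def valid_uav_def by auto
    qed
    have lower: "T * S \<le> (\<Sum>p\<in>P. w (loc p) * L p)"
    proof -
      have "(\<Sum>p\<in>P. w (loc p) * L p) = (\<Sum>i<N. \<Sum>p\<in>{p\<in>P. loc p = i}. w (loc p) * L p)"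
        by (rule sum.group[symmetric]) (use finP locP in auto)
      also have "\<dots> = (\<Sum>i<N. w i * (\<Sum>p\<in>{p\<in>P. loc p = i}. L p))"
        by (rule sum.cong) (auto simp: sum_distrib_left)
      also have "\<dots> \<ge> (\<Sum>i<N. w i * T)"
      proof (rule sum_mono)
        fix i assume i: "i \<in> {..<N}"
        have "T - 0 \<le> (\<Sum>p\<in>{p\<in>P. loc p = i}. sdep (\<sigma> (fst p)) (snd p) - sarr (\<sigma> (fst p)) (snd p))"
        proof (rule cover_len)
          show "finite {p\<in>P. loc p = i}" using finP by simp
          show "\<forall>t. 0 < t \<and> t \<le> T \<longrightarrow> (\<exists>p\<in>{p\<in>P. loc p = i}.
                  sarr (\<sigma> (fst p)) (snd p) \<le> t \<and> t \<le> sdep (\<sigma> (fst p)) (snd p))"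
          proof (intro allI impI)
            fix t assume t: "0 < t \<and> t \<le> T"
            have "covered M \<sigma> i t" using F i t by auto
            then obtain u k where uk: "u < M" "enat k < nsort (\<sigma> u)" "sloc (\<sigma> u) k = i"
              "sarr (\<sigma> u) k \<le> t" "t \<le> sdep (\<sigma> u) k" unfolding covered_def by blast
            have "(u,k) \<in> {p\<in>P. loc p = i}" using uk t unfolding P_def K_def loc_def by auto
            thus "\<exists>p\<in>{p\<in>P. loc p = i}. sarr (\<sigma> (fst p)) (snd p) \<le> t \<and> t \<le> sdep (\<sigma> (fst p)) (snd p)"
              using uk by force
          qed
          show "\<forall>p\<in>{p\<in>P. loc p = i}. sarr (\<sigma> (fst p)) (snd p) \<le> sdep (\<sigma> (fst p)) (snd p)"
          proof
            fix p assume p: "p \<in> {p\<in>P. loc p = i}"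
            then obtain u k where "p = (u,k)" "u < M" "k \<in> K u" unfolding P_def by auto
            moreover have "valid_uav N g f c (\<sigma> u)" using F \<open>u < M\<close> by blast
            ultimately show "sarr (\<sigma> (fst p)) (snd p) \<le> sdep (\<sigma> (fst p)) (snd p)"
              unfolding K_def valid_uav_def by auto
          qed
        qed
        hence "T \<le> (\<Sum>p\<in>{p\<in>P. loc p = i}. L p)" unfolding L_def by simp
        thus "w i * T \<le> w i * (\<Sum>p\<in>{p\<in>P. loc p = i}. L p)"
          using wpos i by (intro mult_left_mono) auto
      qed
      also have "(\<Sum>i<N. w i * T) = T * S" unfolding S_def by (simp add: sum_distrib_left mult.commute)
      finally show ?thesis .
    qed
    show ?thesis using lower upper by linarith
  qed
  have C0: "C \<ge> 0" unfolding C_def using fpos cnn S0 by simp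
  have MS: "S \<le> real M"
  proof (rule ccontr)
    assume "\<not> S \<le> real M"
    hence d: "S - real M > 0" by simp
    define T where "T = real M * C / (S - real M) + 1"
    have "0 \<le> real M * C / (S - real M)" using C0 d by (intro divide_nonneg_pos) auto
    hence T0: "T > 0" unfolding T_def by simp
    have "T * S \<le> real M * (T + C)" using key[OF T0] .
    hence "T * (S - real M) \<le> real M * C" by (simp add: algebra_simps)
    hence "T \<le> real M * C / (S - real M)" using d by (simp add: pos_le_divide_eq)
    thus False unfolding T_def by simp
  qed
  have wsplit: "w i = 1 + (c + 2 * g i) / (f - 2 * g i)" if i: "i < N" for i
  proof -
    have d: "f - 2 * g i \<noteq> 0" using assms(4)[OF i] by simp
    show ?thesis unfolding w_def using d by (simp add: field_simps)
  qed
  have "S = real N + (\<Sum>i<N. (c + 2 * g i) / (f - 2 * g i))"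
    unfolding S_def using wsplit by (simp add: sum.distrib)
  hence "(\<Sum>i<N. (c + 2 * g i) / (f - 2 * g i)) \<le> of_int (int M - int N)" using MS by simp
  hence "\<lceil>\<Sum>i<N. (c + 2 * g i) / (f - 2 * g i)\<rceil> \<le> int M - int N" by (simp add: ceiling_le_iff)
  thus ?thesis by simp
qed

end
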